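(* For every $h\geq 1$, the linear polyacene $L_h$ satisfies $$W_e(L_h)=\tfrac16 h(50h^2+69h+43)\qquad\text{and}\qquad WW_e(L_h)=\tfrac16 h(25h^3+71h^2+77h+79).$$
   Context: The linear polyacene $L_h$ is the benzenoid system (subgraph of the hexagonal lattice) consisting of $h$ hexagons connected linearly, each consecutive pair of hexagons sharing one edge, with all shared edges parallel (so $L_h$ has $4h+2$ vertices and $5h+1$ edges; $L_1$ is the 6-cycle). The distance $d(e,f)$ between edges is the distance between $e$ and $f$ as vertices of the line graph. The edge-Wiener index is $W_e(G)=\sum_{\{e,f\}\subseteq E(G)}d(e,f)$ and the edge-hyper-Wiener index is $WW_e(G)=\frac12\sum_{\{e,f\}\subseteq E(G)}d(e,f)+\frac12\sum_{\{e,f\}\subseteq E(G)}d(e,f)^2$, sums over unordered pairs of distinct edges. *)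

theory Defs
  imports Complex_Main
begin

text \<open>Graphs are given by their edge sets: each edge is a 2-element set of vertices.\<close>

definition ladj :: "'a set set \<Rightarrow> ('a set \<times> 'a set) set" where
  "ladj E = {(e, f). e \<in> E \<and> f \<in> E \<and> e \<noteq> f \<and> e \<inter> f \<noteq> {}}"

definition edist :: "'a set set \<Rightarrow> 'a set \<Rightarrow> 'a set \<Rightarrow> nat" where
  "edist E e f = (LEAST n. (e, f) \<in> ladj E ^^ n)"

text \<open>Sums over unordered pairs of distinct edges, written as half the sum over ordered pairs.\<close>
definition edge_wiener :: "'a set set \<Rightarrow> real" where
  "edge_wiener E = (\<Sum>(e, f) \<in> {(e, f). e \<in> E \<and> f \<in> E \<and> e \<noteq> f}. real (edist E e f)) / 2"

definition edge_hyper_wiener :: "'a set set \<Rightarrow> real" where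
  "edge_hyper_wiener E =
     (1/2) * ((\<Sum>(e, f) \<in> {(e, f). e \<in> E \<and> f \<in> E \<and> e \<noteq> f}. real (edist E e f)) / 2)
   + (1/2) * ((\<Sum>(e, f) \<in> {(e, f). e \<in> E \<and> f \<in> E \<and> e \<noteq> f}. real (edist E e f) ^ 2) / 2)"

text \<open>Linear polyacene L_h: vertices (True, i) (top row) and (False, i) (bottom row),
  0 \<le> i \<le> 2h; top and bottom paths plus the h+1 parallel rungs at even positions.
  Hexagon k (k < h) is (T,2k),(T,2k+1),(T,2k+2),(F,2k+2),(F,2k+1),(F,2k).\<close>
definition polyacene :: "nat \<Rightarrow> (bool \<times> nat) set set" where
  "polyacene h =
     {{(True, i), (True, Suc i)} | i. i < 2 * h}
   \<union> {{(False, i), (False, Suc i)} | i. i < 2 * h}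
   \<union> {{(True, 2 * k), (False, 2 * k)} | k. k \<le> h}"

end

theory Submission
  imports Defs
begin


definition dst :: "nat \<Rightarrow> nat \<Rightarrow> nat" where
  "dst x y = (if x \<le> y then y - x else x - y)"

definition vd :: "bool \<times> nat \<Rightarrow> bool \<times> nat \<Rightarrow> nat" where
  "vd u v = (if fst u = fst v then dst (snd u) (snd v)
             else if snd u = snd v \<and> odd (snd u) then 3 else Suc (dst (snd u) (snd v)))"

lemma vd_sym: "vd u v = vd v u"
  by (auto simp: vd_def dst_def)

lemma vd_zero: "vd u v = 0 \<longleftrightarrow> u = v"
  by (cases u; cases v) (auto simp: vd_def dst_def)

lemma row_mem: "i < 2*h \<Longrightarrow> {(t,i),(t,Suc i)} \<in> polyacene h"
  unfolding polyacene_def by (cases t) auto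

lemma rung_mem: "k \<le> h \<Longrightarrow> {(t,2*k),(\<not>t,2*k)} \<in> polyacene h"
  unfolding polyacene_def by (cases t) (auto simp: insert_commute)

lemma edge_cases: "e \<in> polyacene h \<Longrightarrow>
   (\<exists>t i. i < 2*h \<and> e = {(t,i),(t,Suc i)}) \<or> (\<exists>k. k \<le> h \<and> e = {(True,2*k),(False,2*k)})"
  unfolding polyacene_def by blast

lemma edge_bound: "e \<in> polyacene h \<Longrightarrow> u \<in> e \<Longrightarrow> snd u \<le> 2*h"
  by (drule edge_cases) auto

lemma edge_two: "e \<in> polyacene h \<Longrightarrow> a \<in> e \<Longrightarrow> b \<in> e \<Longrightarrow> a \<noteq> b \<Longrightarrow> e = {a,b}"
  by (drule edge_cases) auto

lemma edge_fin: "e \<in> polyacene h \<Longrightarrow> finite e \<and> e \<noteq> {}"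
  by (drule edge_cases) auto

lemma V1: assumes "{v,w} \<in> polyacene h" shows "vd u w \<le> Suc (vd u v)"
proof -
  from edge_cases[OF assms] show ?thesis
  proof
    assume "\<exists>t i. i < 2*h \<and> {v,w} = {(t,i),(t,Suc i)}"
    then obtain t i where "{v,w} = {(t,i),(t,Suc i)}" by blast
    then have "(v = (t,i) \<and> w = (t,Suc i)) \<or> (v = (t,Suc i) \<and> w = (t,i))"
      by (auto simp: doubleton_eq_iff)
    then show ?thesis by (cases u) (auto simp: vd_def dst_def)
  next
    assume "\<exists>k. k \<le> h \<and> {v,w} = {(True,2*k),(False,2*k)}"
    then obtain k where "{v,w} = {(True,2*k),(False,2*k)}" by blast
    then have "(v = (True,2*k) \<and> w = (False,2*k)) \<or> (v = (False,2*k) \<and> w = (True,2*k))"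
      by (auto simp: doubleton_eq_iff)
    then show ?thesis by (cases u) (auto simp: vd_def dst_def)
  qed
qed

lemma V2: assumes "snd u \<le> 2*h" "snd v \<le> 2*h" "u \<noteq> v"
  shows "\<exists>w. {v,w} \<in> polyacene h \<and> Suc (vd u w) = vd u v"
proof -
  obtain s x where u: "u = (s,x)" by (cases u)
  obtain t y where v: "v = (t,y)" by (cases v)
  have xb: "x \<le> 2*h" and yb: "y \<le> 2*h" using assms u v by auto
  show ?thesis
  proof (cases "s = t")
    case True
    then have "x \<noteq> y" using assms u v by auto
    show ?thesis
    proof (cases "x < y")
      case True
      then obtain j where j: "y = Suc j" by (cases y) auto
      have "{v,(t,j)} \<in> polyacene h" using row_mem[of j h t] j yb v by (auto simp: insert_commute)
      moreover have "Suc (vd u (t,j)) = vd u v" using True `s=t` u v j by (auto simp: vd_def dst_def)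
      ultimately show ?thesis by blast
    next
      case False
      have "{v,(t,Suc y)} \<in> polyacene h" using row_mem[of y h t] False `x\<noteq>y` xb v by auto
      moreover have "Suc (vd u (t,Suc y)) = vd u v" using False `x\<noteq>y` `s=t` u v by (auto simp: vd_def dst_def)
      ultimately show ?thesis by blast
    qed
  next
    case st: False
    show ?thesis
    proof (cases "even y")
      case True
      then obtain k where k: "y = 2*k" by blast
      have "{v,(\<not>t,y)} \<in> polyacene h" using rung_mem[of k h t] k yb v by auto
      moreover have "Suc (vd u (\<not>t,y)) = vd u v" using st True u v by (cases s; cases t) (auto simp: vd_def dst_def)
      ultimately show ?thesis by blast
    next
      case odd: False
      show ?thesis
      proof (cases "x \<le> y")
        case True
        then obtain j where j: "y = Suc j" using odd by (cases y) auto
        have "{v,(t,j)} \<in> polyacene h" using row_mem[of j h t] j yb v by (auto simp: insert_commute)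
        moreover have "Suc (vd u (t,j)) = vd u v" using True st odd u v j by (cases s; cases t) (auto simp: vd_def dst_def)
        ultimately show ?thesis by blast
      next
        case False
        have "{v,(t,Suc y)} \<in> polyacene h" using row_mem[of y h t] False xb v by auto
        moreover have "Suc (vd u (t,Suc y)) = vd u v" using False st odd u v by (cases s; cases t) (auto simp: vd_def dst_def)
        ultimately show ?thesis by blast
      qed
    qed
  qed
qed



lemma vd_refl[simp]: "vd u u = 0" by (simp add: vd_zero)

definition DD :: "(bool \<times> nat) set \<Rightarrow> (bool \<times> nat) set \<Rightarrow> nat" where
  "DD e f = (if e = f then 0 else Suc (Min (case_prod vd ` (e \<times> f))))"

lemma DD_sym: "DD e f = DD f e"
proof -
  have "case_prod vd ` (e \<times> f) = case_prod vd ` (f \<times> e)"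
    by (auto simp: image_iff) (metis vd_sym)+
  then show ?thesis by (simp add: DD_def eq_commute)
qed

lemma Min_le_vd: "finite e \<Longrightarrow> finite f \<Longrightarrow> u \<in> e \<Longrightarrow> v \<in> f \<Longrightarrow> Min (case_prod vd ` (e \<times> f)) \<le> vd u v"
  by (rule Min_le) auto

lemma Min_ex: "finite e \<Longrightarrow> finite f \<Longrightarrow> e \<noteq> {} \<Longrightarrow> f \<noteq> {} \<Longrightarrow>
   \<exists>u\<in>e. \<exists>v\<in>f. Min (case_prod vd ` (e \<times> f)) = vd u v"
proof -
  assume a: "finite e" "finite f" "e \<noteq> {}" "f \<noteq> {}"
  then have "Min (case_prod vd ` (e \<times> f)) \<in> case_prod vd ` (e \<times> f)"
    by (intro Min_in) auto
  then show ?thesis by auto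
qed

lemma Lip:
  assumes gf: "(g,f) \<in> ladj (polyacene h)" and e: "e \<in> polyacene h"
  shows "DD e f \<le> Suc (DD e g)"
proof -
  let ?E = "polyacene h"
  from gf have g: "g \<in> ?E" and f: "f \<in> ?E" and gnf: "g \<noteq> f" and gf0: "g \<inter> f \<noteq> {}"
    by (auto simp: ladj_def)
  obtain w where wg: "w \<in> g" and wf: "w \<in> f" using gf0 by auto
  have fe: "finite e" "e \<noteq> {}" using edge_fin[OF e] by auto
  have ff: "finite f" "f \<noteq> {}" using edge_fin[OF f] by auto
  have fg: "finite g" "g \<noteq> {}" using edge_fin[OF g] by auto
  show ?thesis
  proof (cases "e = f")
    case True then show ?thesis by (simp add: DD_def)
  next
    case enf: False
    show ?thesis
    proof (cases "e = g")
      case True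
      have "Min (case_prod vd ` (e \<times> f)) \<le> vd w w" using Min_le_vd[OF fe(1) ff(1), of w w] True wg wf by auto
      then show ?thesis using True enf by (simp add: DD_def vd_zero)
    next
      case eng: False
      obtain u v' where u: "u \<in> e" and v': "v' \<in> g" and m: "Min (case_prod vd ` (e \<times> g)) = vd u v'"
        using Min_ex[OF fe(1) fg(1) fe(2) fg(2)] by blast
      have dg: "DD e g = Suc (vd u v')" using eng m by (simp add: DD_def)
      have "vd u w \<le> Suc (vd u v')"
      proof (cases "v' = w")
        case True then show ?thesis by simp
      next
        case False
        then have "g = {v', w}" using edge_two[OF g v' wg] by simp
        then show ?thesis using V1[of v' w h u] g by simp
      qed
      moreover have "Min (case_prod vd ` (e \<times> f)) \<le> vd u w" using Min_le_vd[OF fe(1) ff(1) u wf] .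
      ultimately show ?thesis using enf dg by (simp add: DD_def)
    qed
  qed
qed

lemma Desc:
  assumes e: "e \<in> polyacene h" and f: "f \<in> polyacene h" and d: "DD e f = Suc n"
  shows "\<exists>g\<in>polyacene h. (g,f) \<in> ladj (polyacene h) \<and> DD e g = n"
proof -
  let ?E = "polyacene h"
  have fe: "finite e" "e \<noteq> {}" using edge_fin[OF e] by auto
  have ff: "finite f" "f \<noteq> {}" using edge_fin[OF f] by auto
  have enf: "e \<noteq> f" using d by (auto simp: DD_def)
  obtain u v where u: "u \<in> e" and v: "v \<in> f" and m: "Min (case_prod vd ` (e \<times> f)) = vd u v"
    using Min_ex[OF fe(1) ff(1) fe(2) ff(2)] by blast
  have dn: "vd u v = n" using d enf m by (simp add: DD_def)
  show ?thesis
  proof (cases "n = 0")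
    case True
    then have "u = v" using dn vd_zero by auto
    then have "(e,f) \<in> ladj ?E" using u v e f enf by (auto simp: ladj_def)
    then show ?thesis using e True by (auto simp: DD_def)
  next
    case False
    then have unv: "u \<noteq> v" using dn vd_zero by auto
    obtain w where w: "{v,w} \<in> ?E" and sw: "Suc (vd u w) = vd u v"
      using V2[OF edge_bound[OF e u] edge_bound[OF f v] unv] by blast
    let ?g = "{v,w}"
    have wnf: "w \<notin> f"
    proof
      assume "w \<in> f"
      then have "Min (case_prod vd ` (e \<times> f)) \<le> vd u w" using Min_le_vd[OF fe(1) ff(1) u] by blast
      then show False using m sw by simp
    qed
    have gnf: "?g \<noteq> f" using wnf by auto
    have gf: "(?g,f) \<in> ladj ?E" using w f gnf v by (auto simp: ladj_def)
    have veg: "v \<notin> e"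
    proof
      assume "v \<in> e"
      then have "Min (case_prod vd ` (e \<times> f)) \<le> vd v v" using Min_le_vd[OF fe(1) ff(1) _ v] by blast
      then show False using m dn False by (simp add: vd_zero)
    qed
    have eng: "e \<noteq> ?g" using veg by auto
    have "Min (case_prod vd ` (e \<times> ?g)) \<le> vd u w" using Min_le_vd[OF fe(1) _ u, of ?g w] by simp
    then have "DD e ?g \<le> n" using eng sw dn by (simp add: DD_def)
    moreover have "DD e f \<le> Suc (DD e ?g)" using Lip[OF gf e] .
    ultimately have "DD e ?g = n" using d by simp
    then show ?thesis using w gf by blast
  qed
qed

lemma lower: "(e,f) \<in> ladj (polyacene h) ^^ n \<Longrightarrow> e \<in> polyacene h \<Longrightarrow> DD e f \<le> n"
proof (induction n arbitrary: f)
  case 0 then show ?case by (simp add: DD_def)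
next
  case (Suc n)
  then obtain g where eg: "(e,g) \<in> ladj (polyacene h) ^^ n" and gf: "(g,f) \<in> ladj (polyacene h)" by auto
  have "DD e g \<le> n" using Suc.IH[OF eg Suc.prems(2)] .
  moreover have "DD e f \<le> Suc (DD e g)" using Lip[OF gf Suc.prems(2)] .
  ultimately show ?case by simp
qed

lemma upper: "e \<in> polyacene h \<Longrightarrow> f \<in> polyacene h \<Longrightarrow> DD e f = n \<Longrightarrow> (e,f) \<in> ladj (polyacene h) ^^ n"
proof (induction n arbitrary: f)
  case 0 then show ?case by (simp add: DD_def split: if_splits)
next
  case (Suc n)
  then obtain g where g: "g \<in> polyacene h" "(g,f) \<in> ladj (polyacene h)" "DD e g = n"
    using Desc by blast
  then show ?case using Suc.IH[OF Suc.prems(1) g(1) g(3)] by auto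
qed

lemma edist_DD: assumes "e \<in> polyacene h" "f \<in> polyacene h"
  shows "edist (polyacene h) e f = DD e f"
  unfolding edist_def
proof (rule Least_equality)
  show "(e, f) \<in> ladj (polyacene h) ^^ DD e f" using upper[OF assms refl] .
  show "\<And>y. (e, f) \<in> ladj (polyacene h) ^^ y \<Longrightarrow> DD e f \<le> y" using lower assms(1) by blast
qed



definition top :: "nat \<Rightarrow> (bool \<times> nat) set" where "top i = {(True,i),(True,Suc i)}"
definition bot :: "nat \<Rightarrow> (bool \<times> nat) set" where "bot i = {(False,i),(False,Suc i)}"
definition rung :: "nat \<Rightarrow> (bool \<times> nat) set" where "rung k = {(True,2*k),(False,2*k)}"
definition cell :: "nat \<Rightarrow> (bool \<times> nat) set set" where
  "cell m = {top (2*m), top (Suc (2*m)), bot (2*m), bot (Suc (2*m)), rung (Suc m)}"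

lemma DD_pair: "{a,b} \<noteq> {c,d} \<Longrightarrow>
  DD {a,b} {c,d} = Suc (min (min (vd a c) (vd a d)) (min (vd b c) (vd b d)))"
proof -
  assume ne: "{a,b} \<noteq> {c,d}"
  have "case_prod vd ` ({a,b} \<times> {c,d}) = {vd a c, vd a d, vd b c, vd b d}" by auto
  then show ?thesis using ne by (simp add: DD_def min.assoc)
qed

lemma cell_sum: "sum g (cell m) = g (top (2*m)) + g (top (Suc (2*m))) + g (bot (2*m)) + g (bot (Suc (2*m))) + g (rung (Suc m))"
  by (simp add: cell_def top_def bot_def rung_def doubleton_eq_iff add.assoc)

lemma cellcell1: "(\<Sum>e\<in>cell m. \<Sum>f\<in>cell (m + Suc j). real (DD e f)) = 50 * real (Suc j) + 13"
  by (simp add: cell_sum top_def bot_def rung_def DD_pair doubleton_eq_iff vd_def dst_def)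

lemma cellcell2: "(\<Sum>e\<in>cell m. \<Sum>f\<in>cell (m + Suc j). real (DD e f) ^ 2) = 100 * real (Suc j)^2 + 52 * real (Suc j) + 29"
  by (simp add: cell_sum top_def bot_def rung_def DD_pair doubleton_eq_iff vd_def dst_def power2_eq_square algebra_simps)

lemma self1: "(\<Sum>e\<in>cell m. \<Sum>f\<in>cell m. real (DD e f)) = 36"
  by (simp add: cell_sum top_def bot_def rung_def DD_pair doubleton_eq_iff vd_def dst_def DD_def)

lemma self2: "(\<Sum>e\<in>cell m. \<Sum>f\<in>cell m. real (DD e f)^2) = 76"
  by (simp add: cell_sum top_def bot_def rung_def DD_pair doubleton_eq_iff vd_def dst_def DD_def)

lemma r01: "(\<Sum>f\<in>cell n. real (DD (rung 0) f)) = 10 * real n + 9"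
  by (simp add: cell_sum top_def bot_def rung_def DD_pair doubleton_eq_iff vd_def dst_def)

lemma r02: "(\<Sum>f\<in>cell n. real (DD (rung 0) f)^2) = 20 * real n^2 + 36 * real n + 19"
  by (simp add: cell_sum top_def bot_def rung_def DD_pair doubleton_eq_iff vd_def dst_def power2_eq_square algebra_simps)



lemma DD_refl[simp]: "DD e e = 0" by (simp add: DD_def)

lemma poly0: "polyacene 0 = {rung 0}"
  by (auto simp: polyacene_def rung_def)

lemma poly_mono: "polyacene h \<subseteq> polyacene (Suc h)"
proof
  fix e assume "e \<in> polyacene h"
  then consider (t) t i where "i < 2*h" "e = {(t,i),(t,Suc i)}"
      | (r) k where "k \<le> h" "e = {(True,2*k),(False,2*k)}"
    using edge_cases by blast
  then show "e \<in> polyacene (Suc h)"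
  proof cases
    case t then show ?thesis using row_mem[of i "Suc h" t] by simp
  next
    case r then show ?thesis using rung_mem[of k "Suc h" True] by simp
  qed
qed

lemma polySuc: "polyacene (Suc h) = polyacene h \<union> cell h"
proof
  show "polyacene (Suc h) \<subseteq> polyacene h \<union> cell h"
  proof
    fix e assume "e \<in> polyacene (Suc h)"
    then consider (t) t i where "i < 2*Suc h" "e = {(t,i),(t,Suc i)}"
      | (r) k where "k \<le> Suc h" "e = {(True,2*k),(False,2*k)}"
      using edge_cases by blast
    then show "e \<in> polyacene h \<union> cell h"
    proof cases
      case t
      then consider "i < 2*h" | "i = 2*h" | "i = Suc (2*h)" by fastforce
      then show ?thesis
      proof cases
        case 1 then show ?thesis using t row_mem[of i h t] by simp
      next
        case 2 then show ?thesis using t by (cases t) (simp_all add: cell_def top_def bot_def)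
      next
        case 3 then show ?thesis using t by (cases t) (simp_all add: cell_def top_def bot_def)
      qed
    next
      case r
      then consider "k \<le> h" | "k = Suc h" by linarith
      then show ?thesis
      proof cases
        case 1 then show ?thesis using r rung_mem[of k h True] by simp
      next
        case 2 then show ?thesis using r by (simp add: cell_def rung_def)
      qed
    qed
  qed
next
  have "cell h \<subseteq> polyacene (Suc h)"
    unfolding cell_def top_def bot_def rung_def
    using row_mem[of "2*h" "Suc h" True] row_mem[of "Suc (2*h)" "Suc h" True]
      row_mem[of "2*h" "Suc h" False] row_mem[of "Suc (2*h)" "Suc h" False] rung_mem[of "Suc h" "Suc h" True]
    by simp
  then show "polyacene h \<union> cell h \<subseteq> polyacene (Suc h)" using poly_mono by blast
qed

lemma disj: "polyacene h \<inter> cell h = {}"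
proof -
  have "\<And>e. e \<in> cell h \<Longrightarrow> \<exists>u\<in>e. snd u > 2*h"
    by (auto simp: cell_def top_def bot_def rung_def)
  then show ?thesis using edge_bound by fastforce
qed

lemma fin_poly: "finite (polyacene h)"
  by (induction h) (auto simp: poly0 polySuc cell_def)

lemma fin_cell: "finite (cell h)" by (simp add: cell_def)

definition GS :: "(nat \<Rightarrow> real) \<Rightarrow> (bool \<times> nat) set set \<Rightarrow> (bool \<times> nat) set set \<Rightarrow> real" where
  "GS F A B = (\<Sum>e\<in>A. \<Sum>f\<in>B. F (DD e f))"

lemma GS_left: "GS F (polyacene h) X = GS F {rung 0} X + (\<Sum>m<h. GS F (cell m) X)"
proof (induction h)
  case 0 then show ?case by (simp add: poly0)
next
  case (Suc h)
  have "GS F (polyacene (Suc h)) X = GS F (polyacene h) X + GS F (cell h) X"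
    unfolding GS_def polySuc by (rule sum.union_disjoint[OF fin_poly fin_cell disj])
  then show ?case using Suc by simp
qed

lemma GS_swap: "GS F A B = GS F B A"
  unfolding GS_def by (subst sum.swap) (simp add: DD_sym)

lemma S_Suc: "GS F (polyacene (Suc h)) (polyacene (Suc h)) =
   GS F (polyacene h) (polyacene h) + 2 * GS F (polyacene h) (cell h) + GS F (cell h) (cell h)"
proof -
  let ?E = "polyacene h" and ?C = "cell h"
  have inner: "\<And>e. (\<Sum>f\<in>?E \<union> ?C. F (DD e f)) = (\<Sum>f\<in>?E. F (DD e f)) + (\<Sum>f\<in>?C. F (DD e f))"
    by (rule sum.union_disjoint[OF fin_poly fin_cell disj])
  have "GS F (polyacene (Suc h)) (polyacene (Suc h)) = GS F (?E \<union> ?C) ?E + GS F (?E \<union> ?C) ?C"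
    unfolding GS_def polySuc inner by (simp add: sum.distrib)
  also have "GS F (?E \<union> ?C) ?E = GS F ?E ?E + GS F ?C ?E"
    unfolding GS_def by (rule sum.union_disjoint[OF fin_poly fin_cell disj])
  also have "GS F (?E \<union> ?C) ?C = GS F ?E ?C + GS F ?C ?C"
    unfolding GS_def by (rule sum.union_disjoint[OF fin_poly fin_cell disj])
  finally show ?thesis using GS_swap[of F ?C ?E] by simp
qed

lemma Q1: "GS (\<lambda>x. real x) (polyacene h) (cell h) = 10 * real h + 9 + 25 * real h * (real h + 1) + 13 * real h"
proof -
  have "(\<Sum>m<h. GS (\<lambda>x. real x) (cell m) (cell h)) = (\<Sum>m<h. 50 * real (Suc (h - Suc m)) + 13)"
  proof (rule sum.cong)
    fix m assume "m \<in> {..<h}"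
    then have "h = m + Suc (h - Suc m)" by auto
    then show "GS (\<lambda>x. real x) (cell m) (cell h) = 50 * real (Suc (h - Suc m)) + 13"
      using cellcell1[of m "h - Suc m"] unfolding GS_def by metis
  qed simp
  also have "\<dots> = (\<Sum>m<h. 50 * real (Suc m) + 13)"
    by (rule sum.nat_diff_reindex[where g = "\<lambda>i. 50 * real (Suc i) + 13"])
  also have "\<dots> = 25 * real h * (real h + 1) + 13 * real h"
    by (induction h) (auto simp: algebra_simps)
  finally have X: "(\<Sum>m<h. GS (\<lambda>x. real x) (cell m) (cell h)) = 25 * real h * (real h + 1) + 13 * real h" .
  show ?thesis using GS_left[of "\<lambda>x. real x" h "cell h"] X r01[of h] by (simp add: GS_def[of _ "{rung 0}"])
qed

lemma Q2: "GS (\<lambda>x. real x ^ 2) (polyacene h) (cell h) = 20 * real h^2 + 36 * real h + 19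
    + 100 * real h * (real h + 1) * (2 * real h + 1) / 6 + 26 * real h * (real h + 1) + 29 * real h"
proof -
  have "(\<Sum>m<h. GS (\<lambda>x. real x ^ 2) (cell m) (cell h)) = (\<Sum>m<h. 100 * real (Suc (h - Suc m))^2 + 52 * real (Suc (h - Suc m)) + 29)"
  proof (rule sum.cong)
    fix m assume "m \<in> {..<h}"
    then have "h = m + Suc (h - Suc m)" by auto
    then show "GS (\<lambda>x. real x ^ 2) (cell m) (cell h) = 100 * real (Suc (h - Suc m))^2 + 52 * real (Suc (h - Suc m)) + 29"
      using cellcell2[of m "h - Suc m"] unfolding GS_def by metis
  qed simp
  also have "\<dots> = (\<Sum>m<h. 100 * real (Suc m)^2 + 52 * real (Suc m) + 29)"
    by (rule sum.nat_diff_reindex[where g = "\<lambda>i. 100 * real (Suc i)^2 + 52 * real (Suc i) + 29"])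
  also have "\<dots> = 100 * real h * (real h + 1) * (2 * real h + 1) / 6 + 26 * real h * (real h + 1) + 29 * real h"
    by (induction h) (auto simp: algebra_simps power2_eq_square add_divide_distrib)
  finally have X: "(\<Sum>m<h. GS (\<lambda>x. real x ^ 2) (cell m) (cell h)) = 100 * real h * (real h + 1) * (2 * real h + 1) / 6 + 26 * real h * (real h + 1) + 29 * real h" .
  show ?thesis using GS_left[of "\<lambda>x. real x ^ 2" h "cell h"] X r02[of h] by (simp add: GS_def[of _ "{rung 0}"])
qed

lemma S1: "GS (\<lambda>x. real x) (polyacene h) (polyacene h) = real h * (50 * real h ^ 2 + 69 * real h + 43) / 3"
proof (induction h)
  case 0 then show ?case by (simp add: poly0 GS_def)
next
  case (Suc h)
  show ?case unfolding S_Suc Suc Q1 using self1[of h]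
    by (simp add: GS_def algebra_simps power2_eq_square power3_eq_cube add_divide_distrib)
qed

lemma S2: "GS (\<lambda>x. real x ^ 2) (polyacene h) (polyacene h) = real h * (50 * real h ^ 3 + 92 * real h ^ 2 + 85 * real h + 115) / 3"
proof (induction h)
  case 0 then show ?case by (simp add: poly0 GS_def)
next
  case (Suc h)
  show ?case unfolding S_Suc Suc Q2 using self2[of h]
    by (simp add: GS_def algebra_simps power2_eq_square power3_eq_cube power4_eq_xxxx add_divide_distrib)
qed

lemma offdiag:
  fixes F :: "nat \<Rightarrow> real" assumes F0: "F 0 = 0"
  shows "(\<Sum>(e, f) \<in> {(e, f). e \<in> polyacene h \<and> f \<in> polyacene h \<and> e \<noteq> f}. F (edist (polyacene h) e f))
     = GS F (polyacene h) (polyacene h)"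
proof -
  let ?E = "polyacene h"
  have "(\<Sum>(e, f) \<in> {(e, f). e \<in> ?E \<and> f \<in> ?E \<and> e \<noteq> f}. F (edist ?E e f))
      = (\<Sum>(e, f) \<in> {(e, f). e \<in> ?E \<and> f \<in> ?E \<and> e \<noteq> f}. F (DD e f))"
    by (rule sum.cong) (auto simp: edist_DD)
  also have "\<dots> = (\<Sum>(e, f) \<in> ?E \<times> ?E. F (DD e f))"
    by (rule sum.mono_neutral_left) (auto simp: fin_poly DD_def F0)
  also have "\<dots> = GS F ?E ?E"
    unfolding GS_def by (rule sum.cartesian_product[symmetric])
  finally show ?thesis .
qed

theorem mainTheorem5:
  fixes h :: nat
  assumes "h \<ge> 1"
  shows "edge_wiener (polyacene h) = real h * (50 * real h ^ 2 + 69 * real h + 43) / 6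
       \<and> edge_hyper_wiener (polyacene h)
           = real h * (25 * real h ^ 3 + 71 * real h ^ 2 + 77 * real h + 79) / 6"
proof -
  have a: "(\<Sum>(e, f) \<in> {(e, f). e \<in> polyacene h \<and> f \<in> polyacene h \<and> e \<noteq> f}. real (edist (polyacene h) e f))
     = real h * (50 * real h ^ 2 + 69 * real h + 43) / 3"
    using offdiag[of "\<lambda>x. real x" h] S1[of h] by simp
  have b: "(\<Sum>(e, f) \<in> {(e, f). e \<in> polyacene h \<and> f \<in> polyacene h \<and> e \<noteq> f}. real (edist (polyacene h) e f) ^ 2)
     = real h * (50 * real h ^ 3 + 92 * real h ^ 2 + 85 * real h + 115) / 3"
    using offdiag[of "\<lambda>x. real x ^ 2" h] S2[of h] by simp
  show ?thesis unfolding edge_wiener_def edge_hyper_wiener_def a b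
    by (simp add: algebra_simps add_divide_distrib)
qed

end
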